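(* Let $g:\mathbb Z\times\mathbb Z\to[0,\infty)$ be bounded by a polynomial in $|y|$ and $|z|$. Then for every $\theta\in(\underline\theta,\bar\theta)$, $$\mathbf E^\theta\big[(p(\omega_0,\omega_1)+q(\omega_0,\omega_1))\,g(\omega_0,\omega_1)\big]<\infty,$$ where $\omega_0,\omega_1$ are independent with law $\mu^\theta$.
   Context: Fix extended integers $-\infty\le\omega^{\min}\le0$, $1\le\omega^{\max}\le\infty$, $I=\{z\in\mathbb Z:\omega^{\min}-1<z<\omega^{\max}+1\}$. Rates $p,q:I\times I\to[0,\infty)$ satisfy: (R1) $p(\omega^{\min},\cdot)\equiv p(\cdot,\omega^{\max})\equiv q(\omega^{\max},\cdot)\equiv q(\cdot,\omega^{\min})\equiv0$ whenever the corresponding boundary is finite; either $p,q$ are both strictly positive in all other cases, or one is identically $0$. (R2) $p(z+1,y)\ge p(z,y)$, $p(y,z+1)\le p(y,z)$, $q(z+1,y)\le q(z,y)$, $q(y,z+1)\ge q(y,z)$ whenever $y,z,z+1\in I$. (R3) For all $x,y,z\in I$: $p(x,y)+p(y,z)+p(z,x)+q(x,y)+q(y,z)+q(z,x)=p(x,z)+p(z,y)+p(y,x)+q(x,z)+q(z,y)+q(y,x)$. (R4) There are symmetric functions $s_p,s_q$ on $I\times I$ and $f:I\to[0,\infty)$ with $f(\omega^{\min})=0$ if finite and $f(z)>0$ for $z>\omega^{\min}$, such that $p(y,z)=s_p(y,z+1)f(y)$, $q(y,z)=s_q(y+1,z)f(z)$ ($s_p,s_q$ read as $0$ if an argument exceeds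 $\omega^{\max}$). Set $f(0)!=1$, $f(z)!=\prod_{y=1}^zf(y)$ ($z>0$), $f(z)!=1/\prod_{y=z+1}^0f(y)$ ($z<0$); $\bar\theta=\lim_{z\to\infty}\log f(z)$ if $\omega^{\max}=\infty$, else $\infty$; $\underline\theta=\lim_{z\to\infty}\log f(-z)$ if $\omega^{\min}=-\infty$, else $-\infty$; assume $\underline\theta<\bar\theta$. For $\theta\in(\underline\theta,\bar\theta)$, $\mu^\theta(z)=e^{\theta z}/(Z(\theta)f(z)!)$ with $Z(\theta)=\sum_{z\in I}e^{\theta z}/f(z)!<\infty$; $\mathbf E^\theta$ is expectation under the product of $\mu^\theta$. *)

theory Defs
  imports "HOL-Analysis.Analysis"
begin

text \<open>The state space I = {z : omega_min - 1 < z < omega_max + 1}, with omega_min, omega_max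
  extended integers represented as extended reals.\<close>
definition Iset :: "ereal \<Rightarrow> ereal \<Rightarrow> int set" where
  "Iset wmin wmax = {z::int. wmin - 1 < ereal (real_of_int z) \<and> ereal (real_of_int z) < wmax + 1}"

definition ffact :: "(int \<Rightarrow> real) \<Rightarrow> int \<Rightarrow> real" where
  "ffact f z = (if z \<ge> 0 then (\<Prod>y\<in>{1..z}. f y) else 1 / (\<Prod>y\<in>{z+1..0}. f y))"

definition Zpart :: "ereal \<Rightarrow> ereal \<Rightarrow> (int \<Rightarrow> real) \<Rightarrow> real \<Rightarrow> real" where
  "Zpart wmin wmax f \<theta> = (\<Sum>\<^sub>\<infinity>z\<in>Iset wmin wmax. exp (\<theta> * real_of_int z) / ffact f z)"

definition mu :: "ereal \<Rightarrow> ereal \<Rightarrow> (int \<Rightarrow> real) \<Rightarrow> real \<Rightarrow> int \<Rightarrow> real" where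
  "mu wmin wmax f \<theta> z = exp (\<theta> * real_of_int z) / (Zpart wmin wmax f \<theta> * ffact f z)"

end

theory Submission
  imports Defs
begin

lemma lo_aux: "ereal (real_of_int m) - 1 < ereal (real_of_int z) \<longleftrightarrow> ereal (real_of_int m) \<le> ereal (real_of_int z)"
proof -
  have "ereal (real_of_int m) - 1 = ereal (real_of_int (m - 1))" by (simp add: one_ereal_def)
  then show ?thesis by simp linarith
qed
lemma hi_aux: "ereal (real_of_int z) < ereal (real_of_int m) + 1 \<longleftrightarrow> ereal (real_of_int z) \<le> ereal (real_of_int m)"
proof -
  have "ereal (real_of_int m) + 1 = ereal (real_of_int (m + 1))" by simp
  then show ?thesis by simp linarith
qed
lemma lo2: "ereal (real_of_int m) < ereal (real_of_int z) \<longleftrightarrow> ereal (real_of_int m) \<le> ereal (real_of_int (z - 1))"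
  by simp linarith
lemma hi2: "ereal (real_of_int z) < ereal (real_of_int m) \<longleftrightarrow> ereal (real_of_int (z + 1)) \<le> ereal (real_of_int m)"
  by simp linarith

lemma Iset_iff:
  assumes "wmin = -\<infinity> \<or> (\<exists>m::int. wmin = ereal (real_of_int m))"
    and "wmax = \<infinity> \<or> (\<exists>m::int. wmax = ereal (real_of_int m))"
  shows "z \<in> Iset wmin wmax \<longleftrightarrow> wmin \<le> ereal (real_of_int z) \<and> ereal (real_of_int z) \<le> wmax"
proof -
  have a: "wmin - 1 < ereal (real_of_int z) \<longleftrightarrow> wmin \<le> ereal (real_of_int z)"
    using assms(1)
  proof
    assume "wmin = -\<infinity>" then show ?thesis by (simp add: one_ereal_def)
  next
    assume "\<exists>m::int. wmin = ereal (real_of_int m)"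
    then obtain m::int where "wmin = ereal (real_of_int m)" by blast
    then show ?thesis using lo_aux[of m z] by simp
  qed
  have b: "ereal (real_of_int z) < wmax + 1 \<longleftrightarrow> ereal (real_of_int z) \<le> wmax"
    using assms(2)
  proof
    assume "wmax = \<infinity>" then show ?thesis by simp
  next
    assume "\<exists>m::int. wmax = ereal (real_of_int m)"
    then obtain m::int where "wmax = ereal (real_of_int m)" by blast
    then show ?thesis using hi_aux[of z m] by simp
  qed
  show ?thesis unfolding Iset_def using a b by auto
qed

lemma wmin_less_iff:
  assumes "wmin = -\<infinity> \<or> (\<exists>m::int. wmin = ereal (real_of_int m))"
  shows "wmin < ereal (real_of_int z) \<longleftrightarrow> wmin \<le> ereal (real_of_int (z - 1))"
  using assms
proof
  assume "wmin = -\<infinity>" then show ?thesis by simp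
next
  assume "\<exists>m::int. wmin = ereal (real_of_int m)"
  then obtain m::int where "wmin = ereal (real_of_int m)" by blast
  then show ?thesis using lo2[of m z] by simp
qed


lemma poly_exp:
  fixes b :: real assumes "b > 0"
  shows "\<exists>M. \<forall>t\<ge>0. (1 + t) ^ k \<le> M * exp (b * t)"
proof -
  define c where "c = min 1 (b / (real k + 1))"
  have c: "c > 0" "c \<le> 1" "real k * c \<le> b"
    using assms by (auto simp: c_def min_def field_simps)
  show ?thesis
  proof (intro exI allI impI)
    fix t :: real assume t: "t \<ge> 0"
    have "1 + t \<le> (1 + c * t) / c" using c t by (simp add: field_simps)
    also have "\<dots> \<le> exp (c * t) / c" using c by (intro divide_right_mono) auto
    finally have "(1 + t) ^ k \<le> (exp (c * t) / c) ^ k" using t by (intro power_mono) auto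
    also have "\<dots> = (1/c)^k * exp (real k * c * t)"
      by (simp add: power_divide exp_of_nat_mult[symmetric] mult.assoc)
    also have "\<dots> \<le> (1/c)^k * exp (b * t)"
      using c t by (intro mult_left_mono) (auto intro: mult_right_mono)
    finally show "(1 + t) ^ k \<le> (1/c)^k * exp (b * t)" .
  qed
qed

lemma geo_int:
  fixes b :: real assumes "b > 0"
  shows "(\<lambda>y::int. exp (- b * \<bar>real_of_int y\<bar>)) summable_on UNIV"
proof -
  have s: "summable (\<lambda>n::nat. exp (- b) ^ n)"
    using assms by (intro summable_geometric) auto
  have e: "exp (- b * real n) = exp (-b) ^ n" for n :: nat
    by (simp add: exp_of_nat_mult[symmetric] mult.commute)
  have s0: "summable (\<lambda>n::nat. exp (- b * real n))" unfolding e by (rule s)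
  have s1: "(\<lambda>n::nat. exp (- b * real n)) summable_on UNIV"
    by (subst summable_on_UNIV_nonneg_real_iff) (simp_all only: exp_ge_zero s0)
  have s1': "(\<lambda>n::nat. exp (- (b * real n))) summable_on UNIV" using s1 by simp
  have A: "(\<lambda>y::int. exp (- b * \<bar>real_of_int y\<bar>)) summable_on (int ` UNIV)"
    by (subst summable_on_reindex) (simp_all add: o_def s1')
  have B: "(\<lambda>y::int. exp (- b * \<bar>real_of_int y\<bar>)) summable_on ((\<lambda>n. - int n) ` UNIV)"
    by (subst summable_on_reindex) (simp_all add: o_def s1' inj_on_def)
  have U: "(UNIV :: int set) = int ` UNIV \<union> (\<lambda>n. - int n) ` UNIV"
  proof -
    have "y \<in> int ` UNIV \<union> (\<lambda>n. - int n) ` UNIV" for y :: int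
    proof (cases "y \<ge> 0")
      case True then show ?thesis by (auto intro!: image_eqI[of y int "nat y"])
    next
      case False then show ?thesis by (auto intro!: image_eqI[of y _ "nat (-y)"])
    qed
    then show ?thesis by auto
  qed
  show ?thesis by (subst U) (rule summable_on_union[OF A B])
qed

lemma geo_seq:
  fixes u :: "nat \<Rightarrow> real" and a :: real
  assumes D: "\<And>n. D (Suc n) \<Longrightarrow> D n"
    and step: "\<And>n. n \<ge> N \<Longrightarrow> D (Suc n) \<Longrightarrow> u (Suc n) \<le> exp (-a) * u n"
  shows "\<exists>K. \<forall>n. D n \<longrightarrow> u n \<le> K * exp (- a * real n)"
proof -
  define K where "K = (\<Sum>n\<le>N. \<bar>u n\<bar> * exp (a * real n))"
  have le: "\<bar>u n\<bar> * exp (a * real n) \<le> K" if "n \<le> N" for n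
    unfolding K_def by (rule member_le_sum) (use that in auto)
  have ind: "D n \<longrightarrow> u n * exp (a * real n) \<le> u N * exp (a * real N)" if "n \<ge> N" for n
    using that
  proof (induction n rule: dec_induct)
    case base then show ?case by simp
  next
    case (step n)
    show ?case
    proof
      assume "D (Suc n)"
      then have "D n" by (rule D)
      have "u (Suc n) * exp (a * real (Suc n)) \<le> exp (-a) * u n * exp (a * real (Suc n))"
        using assms(2)[OF step(1) \<open>D (Suc n)\<close>] by (intro mult_right_mono) auto
      also have "\<dots> = u n * exp (a * real n)"
        by (simp add: algebra_simps exp_add[symmetric])
      finally show "u (Suc n) * exp (a * real (Suc n)) \<le> u N * exp (a * real N)"
        using step(3) \<open>D n\<close> by linarith
    qed
  qed
  show ?thesis
  proof (intro exI allI impI)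
    fix n assume "D n"
    have "u n * exp (a * real n) \<le> K"
    proof (cases "n \<le> N")
      case True
      have "u n * exp (a * real n) \<le> \<bar>u n\<bar> * exp (a * real n)" by (intro mult_right_mono) auto
      then show ?thesis using le[of n] True by linarith
    next
      case False
      have "u N * exp (a * real N) \<le> \<bar>u N\<bar> * exp (a * real N)" by (intro mult_right_mono) auto
      then show ?thesis using ind[of n] \<open>D n\<close> le[of N] False by linarith
    qed
    then have "u n \<le> K / exp (a * real n)" by (simp add: field_simps)
    then show "u n \<le> K * exp (- a * real n)" by (simp add: exp_minus field_simps)
  qed
qed



lemma mm: fixes a b c A B Cc :: real
  shows "0 \<le> a \<Longrightarrow> a \<le> A \<Longrightarrow> 0 \<le> b \<Longrightarrow> b \<le> B \<Longrightarrow> 0 \<le> c \<Longrightarrow> c \<le> Cc \<Longrightarrow> a*b*c \<le> A*B*Cc"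
  by (intro mult_mono) (auto intro: mult_nonneg_nonneg order_trans)

lemma pbound:
  fixes P :: "int \<Rightarrow> int \<Rightarrow> real" and W f E :: "int \<Rightarrow> real" and I :: "int set"
    and wmin wmax :: ereal
  assumes Iiff: "\<And>z. z \<in> I \<longleftrightarrow> wmin \<le> ereal (real_of_int z) \<and> ereal (real_of_int z) \<le> wmax"
    and lessI: "\<And>z. wmin < ereal (real_of_int z) \<longleftrightarrow> wmin \<le> ereal (real_of_int (z - 1))"
    and wmin_le: "wmin \<le> 0" and wmax_ge: "1 \<le> wmax"
    and Pnn: "\<And>x y. x \<in> I \<Longrightarrow> y \<in> I \<Longrightarrow> P x y \<ge> 0"
    and mono1: "\<And>y z. y \<in> I \<Longrightarrow> z \<in> I \<Longrightarrow> z+1 \<in> I \<Longrightarrow> P z y \<le> P (z+1) y"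
    and mono2: "\<And>y z. y \<in> I \<Longrightarrow> z \<in> I \<Longrightarrow> z+1 \<in> I \<Longrightarrow> P y (z+1) \<le> P y z"
    and Pmin: "\<And>x y. x \<in> I \<Longrightarrow> y \<in> I \<Longrightarrow> ereal (real_of_int x) = wmin \<Longrightarrow> P x y = 0"
    and ident: "\<And>y z. y \<in> I \<Longrightarrow> z \<in> I \<Longrightarrow> y-1 \<in> I \<Longrightarrow> z+1 \<in> I \<Longrightarrow> P y z * f (z+1) = f y * P (z+1) (y-1)"
    and fpos: "\<And>z. z \<in> I \<Longrightarrow> wmin < ereal (real_of_int z) \<Longrightarrow> f z > 0"
    and Wnn: "\<And>z. z \<in> I \<Longrightarrow> W z \<ge> 0"
    and Wstep: "\<And>y. y \<in> I \<Longrightarrow> y-1 \<in> I \<Longrightarrow> W y * f y = exp \<theta> * W (y-1)"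
    and Wbd: "\<And>y. y \<in> I \<Longrightarrow> W y \<le> K * E y"
    and Esh1: "\<And>y. E (y - 1) \<le> L * E y" and Esh2: "\<And>y. E (y + 1) \<le> L * E y"
    and Enn: "\<And>y. E y \<ge> 0"  and Lnn: "L \<ge> 0"
  shows "\<exists>C. \<forall>y\<in>I. \<forall>z\<in>I. W y * W z * P y z \<le> C * (E y * E z)"
proof -
  have conv: "c \<in> I" if "a \<in> I" "b \<in> I" "a \<le> c" "c \<le> b" for a b c
  proof -
    have "ereal (real_of_int a) \<le> ereal (real_of_int c)" "ereal (real_of_int c) \<le> ereal (real_of_int b)"
      using that by auto
    then show ?thesis using that Iiff by (meson order_trans)
  qed
  have I0: "0 \<in> I" and I1: "1 \<in> I" 
  proof -
    have w0: "wmin \<le> ereal 0" "ereal 1 \<le> wmax" using wmin_le wmax_ge by (auto simp: zero_ereal_def one_ereal_def)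
    have e01: "ereal 0 \<le> ereal 1" by simp
    have "ereal 0 \<le> wmax" "wmin \<le> ereal 1" using order_trans[OF e01 w0(2)] order_trans[OF w0(1) e01] by auto
    then show "0 \<in> I" "1 \<in> I" using Iiff w0 by auto
  qed
  have m1: "P a y \<le> P b y" if "a \<in> I" "b \<in> I" "a \<le> b" "y \<in> I" for a b y
  proof -
    have "b \<in> I \<longrightarrow> P a y \<le> P b y" using \<open>a \<le> b\<close>
    proof (induction b rule: int_ge_induct)
      case base then show ?case by simp
    next
      case (step i)
      show ?case
      proof
        assume "i + 1 \<in> I"
        then have "i \<in> I" using conv[OF \<open>a \<in> I\<close> \<open>i+1 \<in> I\<close>] step(1) by auto
        then show "P a y \<le> P (i+1) y" using step mono1[OF \<open>y \<in> I\<close> \<open>i \<in> I\<close> \<open>i+1 \<in> I\<close>] by auto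
      qed
    qed
    then show ?thesis using that by auto
  qed
  have m2: "P y b \<le> P y a" if "a \<in> I" "b \<in> I" "a \<le> b" "y \<in> I" for a b y
  proof -
    have "b \<in> I \<longrightarrow> P y b \<le> P y a" using \<open>a \<le> b\<close>
    proof (induction b rule: int_ge_induct)
      case base then show ?case by simp
    next
      case (step i)
      show ?case
      proof
        assume "i + 1 \<in> I"
        then have "i \<in> I" using conv[OF \<open>a \<in> I\<close> \<open>i+1 \<in> I\<close>] step(1) by auto
        then show "P y (i+1) \<le> P y a" using step mono2[OF \<open>y \<in> I\<close> \<open>i \<in> I\<close> \<open>i+1 \<in> I\<close>] by auto
      qed
    qed
    then show ?thesis using that by auto
  qed
  define B where "B = \<bar>K\<bar> * (1 + L)"
  have B0: "B \<ge> 0" using Lnn by (simp add: B_def)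
  have WB: "W y \<le> B * E y" if "y \<in> I" for y
  proof -
    have "K * E y \<le> \<bar>K\<bar> * E y" using Enn[of y] by (intro mult_right_mono) auto
    also have "\<dots> \<le> B * E y" unfolding B_def using Enn[of y] Lnn
      by (intro mult_right_mono) (auto intro: mult_left_mono[of 1 "1+L", simplified])
    finally show ?thesis using Wbd[OF that] by linarith
  qed
  have WBm: "W (y-1) \<le> B * E y" if "y - 1 \<in> I" for y
  proof -
    have "W (y-1) \<le> K * E (y-1)" using Wbd[OF that] .
    also have "\<dots> \<le> \<bar>K\<bar> * E (y-1)" using Enn[of "y-1"] by (intro mult_right_mono) auto
    also have "\<dots> \<le> \<bar>K\<bar> * (L * E y)" using Esh1[of y] by (intro mult_left_mono) auto
    also have "\<dots> \<le> B * E y" unfolding B_def using Enn[of y] Lnn by (simp add: algebra_simps mult_nonneg_nonneg)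
    finally show ?thesis .
  qed
  have WBp: "W (y+1) \<le> B * E y" if "y + 1 \<in> I" for y
  proof -
    have "W (y+1) \<le> K * E (y+1)" using Wbd[OF that] .
    also have "\<dots> \<le> \<bar>K\<bar> * E (y+1)" using Enn[of "y+1"] by (intro mult_right_mono) auto
    also have "\<dots> \<le> \<bar>K\<bar> * (L * E y)" using Esh2[of y] by (intro mult_left_mono) auto
    also have "\<dots> \<le> B * E y" unfolding B_def using Enn[of y] Lnn by (simp add: algebra_simps mult_nonneg_nonneg)
    finally show ?thesis .
  qed
  have "ereal 0 < ereal (real_of_int 1)" by simp
  then have "wmin < ereal (real_of_int 1)" using wmin_le by (simp add: zero_ereal_def le_less_trans)
  then have f1: "f 1 > 0" using fpos[OF I1] by simp
  define c1 where "c1 = \<bar>P 1 0\<bar>"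
  define c2 where "c2 = exp \<theta> * c1 / f 1"
  define c3 where "c3 = \<bar>P 0 0\<bar>"
  define c4 where "c4 = exp (-\<theta>) * \<bar>f 0\<bar> * \<bar>P 0 (-1)\<bar>"
  have cs: "c1 \<ge> 0" "c2 \<ge> 0" "c3 \<ge> 0" "c4 \<ge> 0" using f1 by (auto simp: c1_def c2_def c3_def c4_def)
  define C where "C = B * B * (c1 + c2 + c3 + c4)"
  have fin: "B * E y * (B * E z) * c \<le> C * (E y * E z)" if "c \<le> c1 + c2 + c3 + c4" for c y z
  proof -
    have "B * E y * (B * E z) * c = (B * B * (E y * E z)) * c" by (simp add: algebra_simps)
    also have "\<dots> \<le> (B * B * (E y * E z)) * (c1 + c2 + c3 + c4)"
      using that B0 Enn by (intro mult_left_mono) auto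
    also have "\<dots> = C * (E y * E z)" by (simp add: C_def algebra_simps)
    finally show ?thesis .
  qed
  have "W y * W z * P y z \<le> C * (E y * E z)" if y: "y \<in> I" and z: "z \<in> I" for y z
  proof (cases "z \<ge> 0")
    case True
    have Pz0: "P y z \<le> P y 0" using m2[OF I0 z True y] .
    show ?thesis
    proof (cases "y \<le> 1")
      case True
      have "P y z \<le> c1" using Pz0 m1[OF y I1 True I0] unfolding c1_def by linarith
      then have "W y * W z * P y z \<le> B * E y * (B * E z) * c1"
        using Wnn[OF y] Wnn[OF z] WB[OF y] WB[OF z] Pnn[OF y z] by (intro mm) auto
      also have "\<dots> \<le> C * (E y * E z)" using cs by (intro fin) auto
      finally show ?thesis .
    next
      case False
      have ym: "y - 1 \<in> I" using conv[OF I1 y] False by auto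
      have "ereal 0 < ereal (real_of_int y)" using False by simp
      then have "wmin < ereal (real_of_int y)" using wmin_le by (simp add: zero_ereal_def le_less_trans)
      then have fy: "f y > 0" using fpos[OF y] by simp
      have "P y 0 * f 1 = f y * P 1 (y-1)" using ident[OF y I0 ym] I1 by simp
      also have "\<dots> \<le> f y * c1" using m2[OF I0 ym _ I1] False fy unfolding c1_def
        by (intro mult_left_mono) auto
      finally have "P y 0 * f 1 \<le> f y * c1" .
      moreover have "P y z * f 1 \<le> P y 0 * f 1" using Pz0 f1 by (intro mult_right_mono) auto
      ultimately have "P y z * f 1 \<le> f y * c1" by linarith
      then have Pyz: "P y z \<le> f y * c1 / f 1" using f1 by (simp add: field_simps)
      have "W y * P y z \<le> W y * (f y * c1 / f 1)" using Wnn[OF y] Pyz by (intro mult_left_mono) auto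
      also have "\<dots> = W (y-1) * c2" using Wstep[OF y ym] by (simp add: c2_def field_simps)
      finally have WP: "W y * P y z \<le> W (y-1) * c2" .
      have "W y * W z * P y z = W z * (W y * P y z)" by (simp add: algebra_simps)
      also have "\<dots> \<le> W z * (W (y-1) * c2)" using Wnn[OF z] WP by (intro mult_left_mono) auto
      also have "\<dots> = W (y-1) * W z * c2" by (simp add: algebra_simps)
      finally have "W y * W z * P y z \<le> W (y-1) * W z * c2" .
      also have "\<dots> \<le> B * E y * (B * E z) * c2"
        using Wnn[OF ym] Wnn[OF z] WBm[OF ym] WB[OF z] cs by (intro mm) auto
      also have "\<dots> \<le> C * (E y * E z)" using cs by (intro fin) auto
      finally show ?thesis .
    qed
  next
    case False
    have Im1: "-1 \<in> I" using conv[OF z I0] False by auto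
    have zp: "z + 1 \<in> I" using conv[OF z I0] False by auto
    have fz: "f (z+1) > 0" using fpos[OF zp] lessI[of "z+1"] Iiff z by auto
    have Wz: "W z = exp (-\<theta>) * W (z+1) * f (z+1)" using Wstep[OF zp] z by (simp add: exp_minus field_simps)
    show ?thesis
    proof (cases "ereal (real_of_int y) = wmin")
      case True
      have "C \<ge> 0" using cs B0 by (simp add: C_def)
      then show ?thesis using Pmin[OF y z True] Enn by (simp add: mult_nonneg_nonneg)
    next
      case ne: False
      have wl0: "wmin \<le> ereal (real_of_int y)" "ereal (real_of_int y) \<le> wmax" using Iiff y by auto
      then have wl: "wmin < ereal (real_of_int y)" using ne by (auto simp: order_less_le)
      have a1: "wmin \<le> ereal (real_of_int (y - 1))" using lessI[of y] wl by simp
      have a2: "ereal (real_of_int (y - 1)) \<le> ereal (real_of_int y)" by simp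
      have ym: "y - 1 \<in> I" using Iiff[of "y-1"] a1 order_trans[OF a2 wl0(2)] by simp
      have fy: "f y > 0" using fpos[OF y wl] .
      show ?thesis
      proof (cases "y \<ge> 1")
        case True
        have "P y z * f (z+1) = f y * P (z+1) (y-1)" using ident[OF y z ym zp] .
        also have "\<dots> \<le> f y * c3" unfolding c3_def using fy False True
          m1[OF zp I0 _ ym] m2[OF I0 ym _ I0] by (intro mult_left_mono) auto
        finally have PP: "P y z * f (z+1) \<le> f y * c3" .
        have "W y * W z * P y z = exp (-\<theta>) * W y * W (z+1) * (P y z * f (z+1))"
          by (simp add: Wz algebra_simps)
        also have "\<dots> \<le> exp (-\<theta>) * W y * W (z+1) * (f y * c3)"
          using PP Wnn[OF y] Wnn[OF zp] by (intro mult_left_mono) auto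
        also have "\<dots> = W (y-1) * W (z+1) * c3"
          using Wstep[OF y ym] by (simp add: exp_minus field_simps)
        also have "\<dots> \<le> B * E y * (B * E z) * c3"
          using Wnn[OF ym] Wnn[OF zp] WBm[OF ym] WBp[OF zp] cs by (intro mm) auto
        also have "\<dots> \<le> C * (E y * E z)" using cs by (intro fin) auto
        finally show ?thesis .
      next
        case yle: False
        have "ereal (real_of_int z) < ereal (real_of_int 0)" using False by simp
        then have "wmin < ereal (real_of_int 0)" using Iiff z by (meson le_less_trans)
        then have f0: "f 0 > 0" using fpos[OF I0] by simp
        have P1: "P y z \<le> P 0 z" using m1[OF y I0 _ z] yle by auto
        have "P 0 z * f (z+1) = f 0 * P (z+1) (-1)" using ident[OF I0 z _ zp] Im1 by simp
        also have "\<dots> \<le> f 0 * \<bar>P 0 (-1)\<bar>" using f0 False m1[OF zp I0 _ Im1]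
          by (intro mult_left_mono) auto
        finally have PP: "P 0 z * f (z+1) \<le> f 0 * \<bar>P 0 (-1)\<bar>" .
        have "W y * W z * P y z \<le> W y * W z * P 0 z"
          using P1 Wnn[OF y] Wnn[OF z] by (intro mult_left_mono) auto
        also have "\<dots> = W y * W (z+1) * (exp (-\<theta>) * (P 0 z * f (z+1)))"
          by (simp add: Wz algebra_simps)
        also have "\<dots> \<le> B * E y * (B * E z) * c4"
          using Wnn[OF y] Wnn[OF zp] WB[OF y] WBp[OF zp] PP f0 fz Pnn[OF I0 z]
          by (intro mm) (auto simp: c4_def intro!: mult_left_mono)
        also have "\<dots> \<le> C * (E y * E z)" using cs by (intro fin) auto
        finally show ?thesis .
      qed
    qed
  qed
  then show ?thesis by blast
qed


theorem lemmaC2: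
  fixes wmin wmax :: ereal
    and p q sp sq :: "int \<Rightarrow> int \<Rightarrow> real"
    and f :: "int \<Rightarrow> real"
    and thlow thup :: ereal
    and g :: "int \<Rightarrow> int \<Rightarrow> real"
    and \<theta> :: real
  assumes wmin_int: "wmin = -\<infinity> \<or> (\<exists>m::int. wmin = ereal (real_of_int m))"
    and wmax_int: "wmax = \<infinity> \<or> (\<exists>m::int. wmax = ereal (real_of_int m))"
    and wmin_le: "wmin \<le> 0" and wmax_ge: "1 \<le> wmax"
    \<comment> \<open>rates are nonnegative\<close>
    and p_nonneg: "\<forall>x\<in>Iset wmin wmax. \<forall>y\<in>Iset wmin wmax. p x y \<ge> 0"
    and q_nonneg: "\<forall>x\<in>Iset wmin wmax. \<forall>y\<in>Iset wmin wmax. q x y \<ge> 0"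
    \<comment> \<open>(R1)\<close>
    and R1_p_min: "\<forall>x\<in>Iset wmin wmax. \<forall>y\<in>Iset wmin wmax. ereal (real_of_int x) = wmin \<longrightarrow> p x y = 0"
    and R1_p_max: "\<forall>x\<in>Iset wmin wmax. \<forall>y\<in>Iset wmin wmax. ereal (real_of_int y) = wmax \<longrightarrow> p x y = 0"
    and R1_q_max: "\<forall>x\<in>Iset wmin wmax. \<forall>y\<in>Iset wmin wmax. ereal (real_of_int x) = wmax \<longrightarrow> q x y = 0"
    and R1_q_min: "\<forall>x\<in>Iset wmin wmax. \<forall>y\<in>Iset wmin wmax. ereal (real_of_int y) = wmin \<longrightarrow> q x y = 0"
    and R1_pos:
      "(\<forall>x\<in>Iset wmin wmax. \<forall>y\<in>Iset wmin wmax.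
          (ereal (real_of_int x) \<noteq> wmin \<and> ereal (real_of_int y) \<noteq> wmax \<longrightarrow> p x y > 0) \<and>
          (ereal (real_of_int x) \<noteq> wmax \<and> ereal (real_of_int y) \<noteq> wmin \<longrightarrow> q x y > 0))
       \<or> (\<forall>x\<in>Iset wmin wmax. \<forall>y\<in>Iset wmin wmax. p x y = 0)
       \<or> (\<forall>x\<in>Iset wmin wmax. \<forall>y\<in>Iset wmin wmax. q x y = 0)"
    \<comment> \<open>(R2)\<close>
    and R2: "\<forall>y\<in>Iset wmin wmax. \<forall>z\<in>Iset wmin wmax. z + 1 \<in> Iset wmin wmax \<longrightarrow>
        p (z+1) y \<ge> p z y \<and> p y (z+1) \<le> p y z \<and> q (z+1) y \<le> q z y \<and> q y (z+1) \<ge> q y z"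
    \<comment> \<open>(R3)\<close>
    and R3: "\<forall>x\<in>Iset wmin wmax. \<forall>y\<in>Iset wmin wmax. \<forall>z\<in>Iset wmin wmax.
        p x y + p y z + p z x + q x y + q y z + q z x = p x z + p z y + p y x + q x z + q z y + q y x"
    \<comment> \<open>(R4)\<close>
    and sp_sym: "\<forall>y\<in>Iset wmin wmax. \<forall>z\<in>Iset wmin wmax. sp y z = sp z y"
    and sq_sym: "\<forall>y\<in>Iset wmin wmax. \<forall>z\<in>Iset wmin wmax. sq y z = sq z y"
    and f_nonneg: "\<forall>z\<in>Iset wmin wmax. f z \<ge> 0"
    and f_min: "\<forall>z\<in>Iset wmin wmax. ereal (real_of_int z) = wmin \<longrightarrow> f z = 0"
    and f_pos: "\<forall>z\<in>Iset wmin wmax. ereal (real_of_int z) > wmin \<longrightarrow> f z > 0"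
    and p_fact: "\<forall>y\<in>Iset wmin wmax. \<forall>z\<in>Iset wmin wmax.
        p y z = (if ereal (real_of_int (z+1)) > wmax then 0 else sp y (z+1)) * f y"
    and q_fact: "\<forall>y\<in>Iset wmin wmax. \<forall>z\<in>Iset wmin wmax.
        q y z = (if ereal (real_of_int (y+1)) > wmax then 0 else sq (y+1) z) * f z"
    \<comment> \<open>theta bounds\<close>
    and thup_def: "if wmax = \<infinity> then ((\<lambda>n::nat. ereal (ln (f (int n)))) \<longlonglongrightarrow> thup) else thup = \<infinity>"
    and thlow_def: "if wmin = -\<infinity> then ((\<lambda>n::nat. ereal (ln (f (- int n)))) \<longlonglongrightarrow> thlow) else thlow = -\<infinity>"
    and th_lt: "thlow < thup"
    \<comment> \<open>g bounded by a polynomial in |y|, |z|\<close>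
    and g_nonneg: "\<forall>y z. g y z \<ge> 0"
    and g_poly: "\<exists>C::real. \<exists>k::nat. \<forall>y z. g y z \<le> C * (1 + \<bar>real_of_int y\<bar> + \<bar>real_of_int z\<bar>) ^ k"
    and theta: "thlow < ereal \<theta>" "ereal \<theta> < thup"
  shows "(\<lambda>(y, z). mu wmin wmax f \<theta> y * mu wmin wmax f \<theta> z * (p y z + q y z) * g y z)
           summable_on (Iset wmin wmax \<times> Iset wmin wmax)"
  
proof -
  define I where "I = Iset wmin wmax"
  have Iiff: "\<And>z. z \<in> I \<longleftrightarrow> wmin \<le> ereal (real_of_int z) \<and> ereal (real_of_int z) \<le> wmax"
    unfolding I_def using Iset_iff[OF wmin_int wmax_int] by blast
  have lessI: "\<And>z. wmin < ereal (real_of_int z) \<longleftrightarrow> wmin \<le> ereal (real_of_int (z - 1))"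
    using wmin_less_iff[OF wmin_int] by blast
  have conv: "c \<in> I" if "a \<in> I" "b \<in> I" "a \<le> c" "c \<le> b" for a b c
  proof -
    have "ereal (real_of_int a) \<le> ereal (real_of_int c)" "ereal (real_of_int c) \<le> ereal (real_of_int b)"
      using that by auto
    then show ?thesis using that Iiff by (meson order_trans)
  qed
  have I0: "0 \<in> I" and I1: "1 \<in> I"
  proof -
    have w0: "wmin \<le> ereal 0" "ereal 1 \<le> wmax" using wmin_le wmax_ge by (auto simp: zero_ereal_def one_ereal_def)
    have e01: "ereal 0 \<le> ereal 1" by simp
    have "ereal 0 \<le> wmax" "wmin \<le> ereal 1" using order_trans[OF e01 w0(2)] order_trans[OF w0(1) e01] by auto
    then show "0 \<in> I" "1 \<in> I" using Iiff w0 by auto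
  qed
  have fpos: "\<And>z. z \<in> I \<Longrightarrow> wmin < ereal (real_of_int z) \<Longrightarrow> f z > 0"
    using f_pos unfolding I_def by blast
  have fposI: "f y > 0" if "y \<in> I" "y - 1 \<in> I" for y
  proof -
    have "wmin \<le> ereal (real_of_int (y - 1))" using Iiff that by auto
    then show ?thesis using fpos[OF that(1)] lessI[of y] by auto
  qed
  have ffact_pos: "ffact f z > 0" if z: "z \<in> I" for z
  proof (cases "z \<ge> 0")
    case True
    have "f y > 0" if "y \<in> {1..z}" for y
    proof -
      have "y \<in> I" using conv[OF I1 z] that by auto
      moreover have "y - 1 \<in> I" using conv[OF I0 z] that by auto
      ultimately show ?thesis by (rule fposI)
    qed
    then have "(\<Prod>y\<in>{1..z}. f y) > 0" by (intro prod_pos) auto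
    then show ?thesis using True by (simp add: ffact_def)
  next
    case False
    have "f y > 0" if "y \<in> {z+1..0}" for y
    proof -
      have "y \<in> I" using conv[OF z I0] that by auto
      moreover have "y - 1 \<in> I" using conv[OF z I0] that by auto
      ultimately show ?thesis by (rule fposI)
    qed
    then have "(\<Prod>y\<in>{z+1..0}. f y) > 0" by (intro prod_pos) auto
    then show ?thesis using False by (simp add: ffact_def)
  qed
  have ffact_step: "ffact f y = ffact f (y - 1) * f y" if y: "y \<in> I" and ym: "y - 1 \<in> I" for y
  proof (cases "y \<ge> 1")
    case True
    have "{1..y} = insert y {1..y-1}" using True by auto
    then have "(\<Prod>x\<in>{1..y}. f x) = f y * (\<Prod>x\<in>{1..y-1}. f x)" by simp
    then show ?thesis using True by (simp add: ffact_def)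
  next
    case False
    have fy: "f y > 0" by (rule fposI[OF y ym])
    have "{y..0} = insert y {y+1..0}" using False by auto
    then have "(\<Prod>x\<in>{y..0}. f x) = f y * (\<Prod>x\<in>{y+1..0}. f x)" by simp
    then show ?thesis using False fy by (simp add: ffact_def)
  qed
  define W where "W z = exp (\<theta> * real_of_int z) / ffact f z" for z
  have Wnn: "\<And>z. z \<in> I \<Longrightarrow> W z \<ge> 0" unfolding W_def using ffact_pos by (simp add: less_imp_le)
  have Wstep: "W y * f y = exp \<theta> * W (y-1)" if y: "y \<in> I" and ym: "y - 1 \<in> I" for y
  proof -
    have fy: "f y > 0" by (rule fposI[OF y ym])
    have fm: "ffact f (y - 1) > 0" by (rule ffact_pos[OF ym])
    have "W y * f y = exp (\<theta> * real_of_int y) / ffact f (y - 1)"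
      unfolding W_def ffact_step[OF y ym] using fy fm by (simp add: field_simps)
    also have "exp (\<theta> * real_of_int y) = exp \<theta> * exp (\<theta> * real_of_int (y - 1))"
      by (simp add: exp_add[symmetric] algebra_simps)
    finally show ?thesis unfolding W_def by simp
  qed
  have posdec: "\<exists>a>0. \<exists>N. \<forall>n\<ge>N. int (Suc n) \<in> I \<longrightarrow> W (int (Suc n)) \<le> exp (-a) * W (int n)"
    using wmax_int
  proof
    assume inf: "wmax = \<infinity>"
    then have lim: "(\<lambda>n::nat. ereal (ln (f (int n)))) \<longlonglongrightarrow> thup" using thup_def by simp
    obtain c where c: "ereal \<theta> < ereal c" "ereal c < thup" using ereal_dense2[OF theta(2)] by blast
    have "eventually (\<lambda>n. ereal c < ereal (ln (f (int n)))) sequentially"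
      using order_tendstoD(1)[OF lim c(2)] .
    then obtain N where N: "\<And>n. n \<ge> N \<Longrightarrow> c < ln (f (int n))" unfolding eventually_sequentially by auto
    show ?thesis
    proof (intro exI[of _ "c - \<theta>"] conjI exI[of _ N] allI impI)
      show "c - \<theta> > 0" using c by simp
      fix n assume n: "N \<le> n" and In: "int (Suc n) \<in> I"
      have In0: "int n \<in> I" using conv[OF I0 In] by auto
      have fp: "f (int (Suc n)) > 0" using fposI[OF In] In0 by simp
      have "c < ln (f (int (Suc n)))" using N[of "Suc n"] n by simp
      then have "exp c < f (int (Suc n))" using fp by (metis exp_less_cancel_iff exp_ln)
      have ws: "W (int (Suc n)) * f (int (Suc n)) = exp \<theta> * W (int n)" using Wstep[OF In] In0 by simp
      have "W (int (Suc n)) * exp c \<le> W (int (Suc n)) * f (int (Suc n))"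
        using Wnn[OF In] \<open>exp c < f (int (Suc n))\<close> by (intro mult_left_mono) auto
      then have "W (int (Suc n)) * exp c \<le> exp \<theta> * W (int n)" using ws by simp
      then have "W (int (Suc n)) \<le> exp \<theta> * W (int n) / exp c" by (simp add: field_simps)
      also have "\<dots> = exp (-(c - \<theta>)) * W (int n)" by (simp add: exp_diff exp_minus field_simps)
      finally show "W (int (Suc n)) \<le> exp (-(c - \<theta>)) * W (int n)" .
    qed
  next
    assume "\<exists>m::int. wmax = ereal (real_of_int m)"
    then obtain m :: int where m: "wmax = ereal (real_of_int m)" by blast
    show ?thesis
    proof (intro exI[of _ "1::real"] conjI exI[of _ "nat m"] allI impI)
      fix n assume n: "nat m \<le> n" and In: "int (Suc n) \<in> I"
      then have "ereal (real_of_int (int (Suc n))) \<le> ereal (real_of_int m)" using Iiff m by auto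
      then have False using n by simp
      then show "W (int (Suc n)) \<le> exp (-1) * W (int n)" ..
    qed simp
  qed
  then obtain a1 N1 where a1: "a1 > 0" and N1: "\<And>n. n \<ge> N1 \<Longrightarrow> int (Suc n) \<in> I \<Longrightarrow> W (int (Suc n)) \<le> exp (-a1) * W (int n)"
    by blast
  have "\<exists>K. \<forall>n. int n \<in> I \<longrightarrow> W (int n) \<le> K * exp (- a1 * real n)"
    by (rule geo_seq[where D = "\<lambda>n. int n \<in> I" and N = N1]) (use conv[OF I0] N1 in auto)
  then obtain K1 where K1: "\<And>n. int n \<in> I \<Longrightarrow> W (int n) \<le> K1 * exp (- a1 * real n)" by blast
  have negdec: "\<exists>a>0. \<exists>N. \<forall>n\<ge>N. - int (Suc n) \<in> I \<longrightarrow> W (- int (Suc n)) \<le> exp (-a) * W (- int n)"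
    using wmin_int
  proof
    assume inf: "wmin = -\<infinity>"
    then have lim: "(\<lambda>n::nat. ereal (ln (f (- int n)))) \<longlonglongrightarrow> thlow" using thlow_def by simp
    obtain c where c: "thlow < ereal c" "ereal c < ereal \<theta>" using ereal_dense2[OF theta(1)] by blast
    have "eventually (\<lambda>n. ereal (ln (f (- int n))) < ereal c) sequentially"
      using order_tendstoD(2)[OF lim c(1)] .
    then obtain N where N: "\<And>n. n \<ge> N \<Longrightarrow> ln (f (- int n)) < c" unfolding eventually_sequentially by auto
    show ?thesis
    proof (intro exI[of _ "\<theta> - c"] conjI exI[of _ N] allI impI)
      show "\<theta> - c > 0" using c by simp
      fix n assume n: "N \<le> n" and In: "- int (Suc n) \<in> I"
      have In0: "- int n \<in> I" using conv[OF In I0] by auto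
      have eq: "- int n - 1 = - int (Suc n)" by simp
      have In1: "- int n - 1 \<in> I" unfolding eq by (rule In)
      have fp: "f (- int n) > 0" using fposI[OF In0 In1] .
      have "ln (f (- int n)) < c" using N n by simp
      then have fc: "f (- int n) < exp c" using fp by (metis exp_less_cancel_iff exp_ln)
      have ws: "W (- int n) * f (- int n) = exp \<theta> * W (- int (Suc n))"
        using Wstep[OF In0 In1] unfolding eq .
      have "exp \<theta> * W (- int (Suc n)) \<le> W (- int n) * exp c"
        unfolding ws[symmetric] using Wnn[OF In0] fc by (intro mult_left_mono) auto
      then have "W (- int (Suc n)) \<le> W (- int n) * exp c / exp \<theta>" by (simp add: field_simps)
      also have "\<dots> = exp (-(\<theta> - c)) * W (- int n)" by (simp add: exp_diff exp_minus field_simps)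
      finally show "W (- int (Suc n)) \<le> exp (-(\<theta> - c)) * W (- int n)" .
    qed
  next
    assume "\<exists>m::int. wmin = ereal (real_of_int m)"
    then obtain m :: int where m: "wmin = ereal (real_of_int m)" by blast
    show ?thesis
    proof (intro exI[of _ "1::real"] conjI exI[of _ "nat (- m)"] allI impI)
      fix n assume n: "nat (- m) \<le> n" and In: "- int (Suc n) \<in> I"
      then have "ereal (real_of_int m) \<le> ereal (real_of_int (- int (Suc n)))" using Iiff m by auto
      then have False using n by simp
      then show "W (- int (Suc n)) \<le> exp (-1) * W (- int n)" ..
    qed simp
  qed
  then obtain a2 N2 where a2: "a2 > 0" and N2: "\<And>n. n \<ge> N2 \<Longrightarrow> - int (Suc n) \<in> I \<Longrightarrow> W (- int (Suc n)) \<le> exp (-a2) * W (- int n)"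
    by blast
  have "\<exists>K. \<forall>n. - int n \<in> I \<longrightarrow> W (- int n) \<le> K * exp (- a2 * real n)"
    by (rule geo_seq[where D = "\<lambda>n. - int n \<in> I" and N = N2]) (use conv[OF _ I0] N2 in auto)
  then obtain K2 where K2: "\<And>n. - int n \<in> I \<Longrightarrow> W (- int n) \<le> K2 * exp (- a2 * real n)" by blast
  define a where "a = min a1 a2"
  have a0: "a > 0" using a1 a2 by (simp add: a_def)
  define E where "E y = exp (- a * \<bar>real_of_int y\<bar>)" for y :: int
  define K where "K = \<bar>K1\<bar> + \<bar>K2\<bar>"
  have Wbd: "W y \<le> K * E y" if y: "y \<in> I" for y
  proof (cases "y \<ge> 0")
    case True
    then have yy: "int (nat y) = y" by simp
    have "W (int (nat y)) \<le> K1 * exp (- a1 * real (nat y))" by (rule K1) (unfold yy, rule y)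
    then have "W y \<le> K1 * exp (- a1 * real (nat y))" unfolding yy .
    also have "\<dots> \<le> \<bar>K1\<bar> * exp (- a1 * real (nat y))" by (intro mult_right_mono) auto
    also have "\<dots> \<le> K * E y" unfolding K_def E_def using True a_def
      by (intro mult_mono) (auto simp: mult_right_mono)
    finally show ?thesis .
  next
    case False
    then have yy: "- int (nat (- y)) = y" by simp
    have "W (- int (nat (- y))) \<le> K2 * exp (- a2 * real (nat (- y)))" by (rule K2) (unfold yy, rule y)
    then have "W y \<le> K2 * exp (- a2 * real (nat (- y)))" unfolding yy .
    also have "\<dots> \<le> \<bar>K2\<bar> * exp (- a2 * real (nat (- y)))" by (intro mult_right_mono) auto
    also have "\<dots> \<le> K * E y" unfolding K_def E_def using False a_def
      by (intro mult_mono) (auto simp: mult_right_mono)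
    finally show ?thesis .
  qed
  have Enn: "\<And>y. E y \<ge> 0" unfolding E_def by simp
  have Esh1: "E (y - 1) \<le> exp a * E y" for y
  proof -
    have h: "\<bar>real_of_int y\<bar> \<le> \<bar>real_of_int (y - 1)\<bar> + 1" by arith
    then have "a * \<bar>real_of_int y\<bar> \<le> a * (\<bar>real_of_int (y - 1)\<bar> + 1)" using a0 by (intro mult_left_mono) auto
    then have "- a * \<bar>real_of_int (y - 1)\<bar> \<le> a + - a * \<bar>real_of_int y\<bar>" by (simp add: algebra_simps)
    then show ?thesis unfolding E_def by (simp add: exp_add[symmetric])
  qed
  have Esh2: "E (y + 1) \<le> exp a * E y" for y
  proof -
    have h: "\<bar>real_of_int y\<bar> \<le> \<bar>real_of_int (y + 1)\<bar> + 1" by arith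
    then have "a * \<bar>real_of_int y\<bar> \<le> a * (\<bar>real_of_int (y + 1)\<bar> + 1)" using a0 by (intro mult_left_mono) auto
    then have "- a * \<bar>real_of_int (y + 1)\<bar> \<le> a + - a * \<bar>real_of_int y\<bar>" by (simp add: algebra_simps)
    then show ?thesis unfolding E_def by (simp add: exp_add[symmetric])
  qed

  have pnn: "\<And>x y. x \<in> I \<Longrightarrow> y \<in> I \<Longrightarrow> p x y \<ge> 0" using p_nonneg unfolding I_def by blast
  have qnn: "\<And>x y. x \<in> I \<Longrightarrow> y \<in> I \<Longrightarrow> q y x \<ge> 0" using q_nonneg unfolding I_def by blast
  have pm1: "\<And>y z. y \<in> I \<Longrightarrow> z \<in> I \<Longrightarrow> z+1 \<in> I \<Longrightarrow> p z y \<le> p (z+1) y" using R2 unfolding I_def by blast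
  have pm2: "\<And>y z. y \<in> I \<Longrightarrow> z \<in> I \<Longrightarrow> z+1 \<in> I \<Longrightarrow> p y (z+1) \<le> p y z" using R2 unfolding I_def by blast
  have qm1: "\<And>y z. y \<in> I \<Longrightarrow> z \<in> I \<Longrightarrow> z+1 \<in> I \<Longrightarrow> q y z \<le> q y (z+1)" using R2 unfolding I_def by blast
  have qm2: "\<And>y z. y \<in> I \<Longrightarrow> z \<in> I \<Longrightarrow> z+1 \<in> I \<Longrightarrow> q (z+1) y \<le> q z y" using R2 unfolding I_def by blast
  have pmin: "\<And>x y. x \<in> I \<Longrightarrow> y \<in> I \<Longrightarrow> ereal (real_of_int x) = wmin \<Longrightarrow> p x y = 0"
    using R1_p_min unfolding I_def by blast
  have qmin: "\<And>x y. x \<in> I \<Longrightarrow> y \<in> I \<Longrightarrow> ereal (real_of_int x) = wmin \<Longrightarrow> q y x = 0"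
    using R1_q_min unfolding I_def by blast
  have notgt: "\<not> ereal (real_of_int z) > wmax" if "z \<in> I" for z using Iiff that by (simp add: not_less)
  have pid: "p y z * f (z+1) = f y * p (z+1) (y-1)" if "y \<in> I" "z \<in> I" "y-1 \<in> I" "z+1 \<in> I" for y z
  proof -
    have "p y z = sp y (z+1) * f y" using p_fact that notgt[of "z+1"] unfolding I_def by auto
    moreover have "p (z+1) (y-1) = sp (z+1) y * f (z+1)" using p_fact that notgt[of y] unfolding I_def by auto
    moreover have "sp y (z+1) = sp (z+1) y" using sp_sym that unfolding I_def by blast
    ultimately show ?thesis by simp
  qed
  have qid: "q z y * f (z+1) = f y * q (y-1) (z+1)" if "y \<in> I" "z \<in> I" "y-1 \<in> I" "z+1 \<in> I" for y z
  proof -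
    have "q z y = sq (z+1) y * f y" using q_fact that notgt[of "z+1"] unfolding I_def by auto
    moreover have "q (y-1) (z+1) = sq y (z+1) * f (z+1)" using q_fact that notgt[of y] unfolding I_def by auto
    moreover have "sq y (z+1) = sq (z+1) y" using sq_sym that unfolding I_def by blast
    ultimately show ?thesis by simp
  qed
  have "\<exists>C. \<forall>y\<in>I. \<forall>z\<in>I. W y * W z * p y z \<le> C * (E y * E z)"
    by (rule pbound[OF Iiff lessI wmin_le wmax_ge pnn pm1 pm2 pmin pid fpos Wnn Wstep Wbd Esh1 Esh2 Enn exp_ge_zero])
  then obtain Cp where Cp: "\<And>y z. y \<in> I \<Longrightarrow> z \<in> I \<Longrightarrow> W y * W z * p y z \<le> Cp * (E y * E z)" by blast
  have "\<exists>C. \<forall>y\<in>I. \<forall>z\<in>I. W y * W z * (\<lambda>a b. q b a) y z \<le> C * (E y * E z)"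
    by (rule pbound[OF Iiff lessI wmin_le wmax_ge qnn qm1 qm2 qmin qid fpos Wnn Wstep Wbd Esh1 Esh2 Enn exp_ge_zero])
  then obtain Cq where Cq: "\<And>y z. y \<in> I \<Longrightarrow> z \<in> I \<Longrightarrow> W y * W z * q z y \<le> Cq * (E y * E z)" by auto
  obtain Cg k where Cg: "\<And>y z. g y z \<le> Cg * (1 + \<bar>real_of_int y\<bar> + \<bar>real_of_int z\<bar>) ^ k" using g_poly by blast
  obtain M where M: "\<And>t. t \<ge> 0 \<Longrightarrow> (1 + t) ^ k \<le> M * exp (a / 2 * t)" using poly_exp[of "a/2" k] a0 by auto
  define G where "G y = exp (- (a/2) * \<bar>real_of_int y\<bar>)" for y :: int
  define D where "D = (\<bar>Cp\<bar> + \<bar>Cq\<bar>) * \<bar>Cg\<bar> * (\<bar>M\<bar> * \<bar>M\<bar>)"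
  define T where "T = (\<lambda>(y, z). W y * W z * (p y z + q y z) * g y z)"
  have EG: "E y * (1 + \<bar>real_of_int y\<bar>) ^ k \<le> \<bar>M\<bar> * G y" for y
  proof -
    have "(1 + \<bar>real_of_int y\<bar>) ^ k \<le> M * exp (a / 2 * \<bar>real_of_int y\<bar>)" by (rule M) simp
    also have "\<dots> \<le> \<bar>M\<bar> * exp (a / 2 * \<bar>real_of_int y\<bar>)" by (intro mult_right_mono) auto
    finally have "E y * (1 + \<bar>real_of_int y\<bar>) ^ k \<le> E y * (\<bar>M\<bar> * exp (a / 2 * \<bar>real_of_int y\<bar>))"
      using Enn by (intro mult_left_mono) auto
    also have "\<dots> = \<bar>M\<bar> * G y" unfolding E_def G_def by (simp add: exp_add[symmetric] algebra_simps)
    finally show ?thesis .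
  qed
  have Tb: "T (y, z) \<le> D * (G y * G z)" "T (y, z) \<ge> 0" if y: "y \<in> I" and z: "z \<in> I" for y z
  proof -
    have s1: "W y * W z * (p y z + q y z) \<le> (\<bar>Cp\<bar> + \<bar>Cq\<bar>) * (E y * E z)"
    proof -
      have "W y * W z * (p y z + q y z) = W y * W z * p y z + W z * W y * q y z" by (simp add: algebra_simps)
      also have "\<dots> \<le> Cp * (E y * E z) + Cq * (E z * E y)" using Cp[OF y z] Cq[OF z y] by linarith
      also have "\<dots> \<le> (\<bar>Cp\<bar> + \<bar>Cq\<bar>) * (E y * E z)"
      proof -
        have ee: "0 \<le> E y * E z" using Enn[of y] Enn[of z] by simp
        have h1: "Cp * (E y * E z) \<le> \<bar>Cp\<bar> * (E y * E z)" by (rule mult_right_mono[OF abs_ge_self ee])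
        have h2: "Cq * (E y * E z) \<le> \<bar>Cq\<bar> * (E y * E z)" by (rule mult_right_mono[OF abs_ge_self ee])
        have h3: "Cq * (E z * E y) = Cq * (E y * E z)" by (simp add: mult.commute)
        have h4: "(\<bar>Cp\<bar> + \<bar>Cq\<bar>) * (E y * E z) = \<bar>Cp\<bar> * (E y * E z) + \<bar>Cq\<bar> * (E y * E z)"
          by (simp add: distrib_right)
        have "Cp * (E y * E z) + Cq * (E z * E y) = Cp * (E y * E z) + Cq * (E y * E z)" by (simp only: h3)
        also have "\<dots> \<le> \<bar>Cp\<bar> * (E y * E z) + \<bar>Cq\<bar> * (E y * E z)" by (rule add_mono[OF h1 h2])
        also have "\<dots> = (\<bar>Cp\<bar> + \<bar>Cq\<bar>) * (E y * E z)" by (simp only: h4)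
        finally show ?thesis .
      qed
      finally show ?thesis .
    qed
    have n1: "W y * W z * (p y z + q y z) \<ge> 0" using Wnn[OF y] Wnn[OF z] pnn[OF y z] qnn[OF z y] by simp
    have s2: "g y z \<le> \<bar>Cg\<bar> * ((1 + \<bar>real_of_int y\<bar>) ^ k * (1 + \<bar>real_of_int z\<bar>) ^ k)"
    proof -
      have "1 + \<bar>real_of_int y\<bar> + \<bar>real_of_int z\<bar> \<le> (1 + \<bar>real_of_int y\<bar>) * (1 + \<bar>real_of_int z\<bar>)"
        by (simp add: algebra_simps)
      then have "(1 + \<bar>real_of_int y\<bar> + \<bar>real_of_int z\<bar>) ^ k \<le> ((1 + \<bar>real_of_int y\<bar>) * (1 + \<bar>real_of_int z\<bar>)) ^ k"
        by (intro power_mono) auto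
      then have XY: "(1 + \<bar>real_of_int y\<bar> + \<bar>real_of_int z\<bar>) ^ k \<le> ((1 + \<bar>real_of_int y\<bar>) * (1 + \<bar>real_of_int z\<bar>)) ^ k" .
      have X0: "0 \<le> (1 + \<bar>real_of_int y\<bar> + \<bar>real_of_int z\<bar>) ^ k" by simp
      have "Cg * (1 + \<bar>real_of_int y\<bar> + \<bar>real_of_int z\<bar>) ^ k \<le> \<bar>Cg\<bar> * (1 + \<bar>real_of_int y\<bar> + \<bar>real_of_int z\<bar>) ^ k"
        by (rule mult_right_mono[OF abs_ge_self X0])
      also have "\<dots> \<le> \<bar>Cg\<bar> * ((1 + \<bar>real_of_int y\<bar>) * (1 + \<bar>real_of_int z\<bar>)) ^ k"
        by (rule mult_left_mono[OF XY abs_ge_zero])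
      finally have "Cg * (1 + \<bar>real_of_int y\<bar> + \<bar>real_of_int z\<bar>) ^ k \<le> \<bar>Cg\<bar> * ((1 + \<bar>real_of_int y\<bar>) * (1 + \<bar>real_of_int z\<bar>)) ^ k" .
      then show ?thesis using Cg[of y z] by (simp add: power_mult_distrib)
    qed
    have "T (y, z) \<le> ((\<bar>Cp\<bar> + \<bar>Cq\<bar>) * (E y * E z)) * (\<bar>Cg\<bar> * ((1 + \<bar>real_of_int y\<bar>) ^ k * (1 + \<bar>real_of_int z\<bar>) ^ k))"
      unfolding T_def using s1 s2 n1 g_nonneg Enn by (auto intro!: mult_mono)
    also have "\<dots> = ((\<bar>Cp\<bar> + \<bar>Cq\<bar>) * \<bar>Cg\<bar>) * ((E y * (1 + \<bar>real_of_int y\<bar>) ^ k) * (E z * (1 + \<bar>real_of_int z\<bar>) ^ k))"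
      by (simp add: algebra_simps)
    also have "\<dots> \<le> ((\<bar>Cp\<bar> + \<bar>Cq\<bar>) * \<bar>Cg\<bar>) * ((\<bar>M\<bar> * G y) * (\<bar>M\<bar> * G z))"
    proof -
      have g0: "0 \<le> \<bar>M\<bar> * G y" by (simp add: G_def)
      have e0: "0 \<le> E z * (1 + \<bar>real_of_int z\<bar>) ^ k" using Enn[of z] by simp
      show ?thesis by (rule mult_left_mono[OF mult_mono[OF EG[of y] EG[of z] g0 e0]]) simp
    qed
    also have "\<dots> = D * (G y * G z)" by (simp add: D_def algebra_simps)
    finally show "T (y, z) \<le> D * (G y * G z)" .
    show "T (y, z) \<ge> 0" unfolding T_def using n1 g_nonneg by simp
  qed
  have Gs: "G summable_on UNIV" unfolding G_def using geo_int[of "a/2"] a0 by simp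
  have GG: "(\<lambda>(y, z). G y * G z) summable_on (UNIV \<times> UNIV)"
  proof (rule summable_on_SigmaI[where g = "\<lambda>y. G y * infsum G UNIV"])
    show "((\<lambda>z. case (x, z) of (y, z) \<Rightarrow> G y * G z) has_sum G x * infsum G UNIV) UNIV" for x
      using has_sum_cmult_right[OF has_sum_infsum[OF Gs], of "G x"] by simp
    show "(\<lambda>y. G y * infsum G UNIV) summable_on UNIV" by (rule summable_on_cmult_left[OF Gs])
    show "0 \<le> (case (x, y) of (y, z) \<Rightarrow> G y * G z)" for x y by (simp add: G_def)
  qed
  have DGG: "(\<lambda>x. D * (case x of (y, z) \<Rightarrow> G y * G z)) summable_on (I \<times> I)"
    by (rule summable_on_subset[OF summable_on_cmult_right[OF GG]]) auto
  have TS: "T summable_on (I \<times> I)"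
  proof (rule summable_on_comparison_test[OF DGG])
    fix x assume "x \<in> I \<times> I"
    then obtain y z where x: "x = (y, z)" "y \<in> I" "z \<in> I" by blast
    show "T x \<le> D * (case x of (y, z) \<Rightarrow> G y * G z)" using Tb(1)[OF x(2,3)] x(1) by simp
    show "0 \<le> T x" using Tb(2)[OF x(2,3)] x(1) by simp
  qed
  define iZ where "iZ = inverse (Zpart wmin wmax f \<theta>)"
  have mu_eq: "mu wmin wmax f \<theta> z = iZ * W z" for z
    unfolding mu_def W_def iZ_def by (simp add: divide_inverse inverse_mult_distrib mult_ac)
  have "(\<lambda>(y, z). mu wmin wmax f \<theta> y * mu wmin wmax f \<theta> z * (p y z + q y z) * g y z)
      = (\<lambda>x. (iZ * iZ) * T x)"
    by (simp add: mu_eq T_def fun_eq_iff mult_ac)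
  moreover have "(\<lambda>x. (iZ * iZ) * T x) summable_on (I \<times> I)" by (rule summable_on_cmult_right[OF TS])
  ultimately show ?thesis unfolding I_def by simp
qed

end
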